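(* Any two node-edge-checkable problems $P$ and $\Pi$ satisfy $\Pi\times\tau_P(\Pi)\xrightarrow{0}P$.
   Context: Fix $\Delta$. A node-edge-checkable problem $\Pi=(\Sigma_\Pi,\mathcal{N}_\Pi,\mathcal{E}_\Pi)$ has a finite label set, a node constraint $\mathcal{N}_\Pi$ (a set of cardinality-$\Delta$ multisets over $\Sigma_\Pi$) and an edge constraint $\mathcal{E}_\Pi$ (a set of cardinality-$2$ multisets). Relaxation. $\Pi\xrightarrow{0}\Pi'$ means there is a map $f$ with the following properties. For every $C=L_1\dots L_\Delta\in\mathcal{N}_\Pi$ and every $j$, $f$ assigns a label $f(C,j)\in\Sigma_{\Pi'}$. The map must satisfy: - $f(C,1)\dots f(C,\Delta)\in\mathcal{N}_{\Pi'}$; - whenever the $j$-th entry of $C$ and the $j'$-th entry of $C'$ form an element of $\mathcal{E}_\Pi$, then $f(C,j)f(C',j')\in\mathcal{E}_{\Pi'}$. Product. $\Pi\times\Pi'$ has labels $\Sigma_\Pi\times\Sigma_{\Pi'}$. Its node configurations are the multisets $(L_1,L'_1)\dots(L_\Delta,L'_\Delta)$ with $L_1\dots L_\Delta\in\mathcal{N}_\Pi$ and $L'_1\dots L'_\Delta\in\mathcal{N}_{\Pi'}$. Its edge configurations are defined analogously. The problem $\mathrm{R}^*(P)$ is defined as follows. - Labels are the nonempty subsets of $\Sigma_P$. - Node configurations are the $S_1\dots S_\Delta$ admitting $L_i\in S_i$ with $L_1\dots L_\Delta\in\mathcal{N}_P$. - Edge configurations are the $S_1S_2$ with $L_1L_2\in\mathcal{E}_P$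 for all $L_1\in S_1,L_2\in S_2$. The problem $\tau_P(\Pi)$ is defined as follows. - Labels are all functions $\Sigma_\Pi\to\Sigma_{\mathrm{R}^*(P)}$. - $f_1\dots f_\Delta$ is a node configuration iff $f_1(L_1)\dots f_\Delta(L_\Delta)\in\mathcal{N}_{\mathrm{R}^*(P)}$ for all $L_1\dots L_\Delta\in\mathcal{N}_\Pi$. - $f_1f_2$ is an edge configuration iff $f_1(L_1)f_2(L_2)\in\mathcal{E}_{\mathrm{R}^*(P)}$ for all $L_1L_2\in\mathcal{E}_\Pi$. *)

theory Defs
  imports Main "HOL-Library.Multiset" "HOL-Library.FuncSet"
begin

record 'a necp =
  labels :: "'a set"
  nodes  :: "'a multiset set"
  edges  :: "'a multiset set"

definition wf_necp :: "nat \<Rightarrow> 'a necp \<Rightarrow> bool" where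
  "wf_necp \<Delta> P \<longleftrightarrow> finite (labels P)
     \<and> (\<forall>C\<in>nodes P. size C = \<Delta> \<and> set_mset C \<subseteq> labels P)
     \<and> (\<forall>C\<in>edges P. size C = 2 \<and> set_mset C \<subseteq> labels P)"

text \<open>Zero-round relaxation. Each node configuration C is presented as a sequence
(ord C) of its entries (indices 0..Delta-1); f C j is the label assigned to the j-th entry.\<close>
definition relax0 :: "nat \<Rightarrow> 'a necp \<Rightarrow> 'b necp \<Rightarrow> bool" where
  "relax0 \<Delta> P Q \<longleftrightarrow> (\<exists>(ord :: 'a multiset \<Rightarrow> 'a list) (f :: 'a multiset \<Rightarrow> nat \<Rightarrow> 'b).
     (\<forall>C\<in>nodes P. length (ord C) = \<Delta> \<and> mset (ord C) = C)
   \<and> (\<forall>C\<in>nodes P. (\<forall>j<\<Delta>. f C j \<in> labels Q) \<and> mset (map (f C) [0..<\<Delta>]) \<in> nodes Q)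
   \<and> (\<forall>C\<in>nodes P. \<forall>C'\<in>nodes P. \<forall>j<\<Delta>. \<forall>j'<\<Delta>.
        {#ord C ! j, ord C' ! j'#} \<in> edges P \<longrightarrow> {#f C j, f C' j'#} \<in> edges Q))"

definition prod_necp :: "'a necp \<Rightarrow> 'b necp \<Rightarrow> ('a \<times> 'b) necp" where
  "prod_necp P Q = \<lparr> labels = labels P \<times> labels Q,
     nodes = {M. image_mset fst M \<in> nodes P \<and> image_mset snd M \<in> nodes Q},
     edges = {M. image_mset fst M \<in> edges P \<and> image_mset snd M \<in> edges Q} \<rparr>"

definition Rstar :: "'p necp \<Rightarrow> 'p set necp" where
  "Rstar P = \<lparr> labels = {S. S \<noteq> {} \<and> S \<subseteq> labels P},
     nodes = {M. set_mset M \<subseteq> {S. S \<noteq> {} \<and> S \<subseteq> labels P} \<and>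
                 (\<exists>Ss Ls. mset Ss = M \<and> length Ls = length Ss \<and>
                    (\<forall>i<length Ss. Ls ! i \<in> Ss ! i) \<and> mset Ls \<in> nodes P)},
     edges = {{#S1, S2#} | S1 S2. S1 \<noteq> {} \<and> S1 \<subseteq> labels P \<and> S2 \<noteq> {} \<and> S2 \<subseteq> labels P \<and>
                 (\<forall>L1\<in>S1. \<forall>L2\<in>S2. {#L1, L2#} \<in> edges P)} \<rparr>"

definition tau :: "nat \<Rightarrow> 'p necp \<Rightarrow> 'a necp \<Rightarrow> ('a \<Rightarrow> 'p set) necp" where
  "tau \<Delta> P Q = \<lparr> labels = labels Q \<rightarrow>\<^sub>E labels (Rstar P),
     nodes = {F. size F = \<Delta> \<and> set_mset F \<subseteq> (labels Q \<rightarrow>\<^sub>E labels (Rstar P)) \<and>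
                 (\<forall>fs Ls. mset fs = F \<and> length Ls = length fs \<and> mset Ls \<in> nodes Q \<longrightarrow>
                     mset (map2 (\<lambda>f L. f L) fs Ls) \<in> nodes (Rstar P))},
     edges = {{#f1, f2#} | f1 f2. f1 \<in> labels Q \<rightarrow>\<^sub>E labels (Rstar P) \<and>
                 f2 \<in> labels Q \<rightarrow>\<^sub>E labels (Rstar P) \<and>
                 (\<forall>L1 L2. {#L1, L2#} \<in> edges Q \<longrightarrow> {#f1 L1, f2 L2#} \<in> edges (Rstar P))} \<rparr>"

end

theory Submission
  imports Defs
begin

lemma perm_map:
  assumes "mset Ss = mset (map g xs)"
  shows "\<exists>ys. mset ys = mset xs \<and> map g ys = Ss"
proof -
  have "list_all2 (\<lambda>y x. y = g x) (map g xs) xs"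
    by (simp add: list_all2_conv_all_nth)
  from list_all2_reorder_left_invariance[OF this assms] obtain ys where
    "list_all2 (\<lambda>y x. y = g x) Ss ys" "mset ys = mset xs" by blast
  moreover have "Ss = map g ys" using \<open>list_all2 (\<lambda>y x. y = g x) Ss ys\<close>
    by (induct rule: list_all2_induct) auto
  ultimately show ?thesis by auto
qed

lemma pair_eq:
  assumes "{#a, b#} = {#c, d#}"
  shows "(a = c \<and> b = d) \<or> (a = d \<and> b = c)"
  using assms by (auto simp: add_eq_conv_ex)

lemma key:
  assumes C: "C \<in> nodes (prod_necp Q (tau \<Delta> P Q))"
  shows "\<exists>ys Ls. mset ys = C \<and> length Ls = length ys \<and>
     (\<forall>i<length ys. Ls ! i \<in> (snd (ys ! i)) (fst (ys ! i))) \<and> mset Ls \<in> nodes P"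
proof -
  obtain xs where xs: "mset xs = C" using ex_mset by blast
  have q: "mset (map fst xs) \<in> nodes Q" and t: "mset (map snd xs) \<in> nodes (tau \<Delta> P Q)"
    using C xs by (auto simp: prod_necp_def)
  have "mset (map2 (\<lambda>f L. f L) (map snd xs) (map fst xs)) \<in> nodes (Rstar P)"
    using t q unfolding tau_def by auto
  moreover have "map2 (\<lambda>f L. f L) (map snd xs) (map fst xs) = map (\<lambda>p. snd p (fst p)) xs"
    by (induct xs) auto
  ultimately have "mset (map (\<lambda>p. snd p (fst p)) xs) \<in> nodes (Rstar P)" by simp
  then obtain Ss Ls where S: "mset Ss = mset (map (\<lambda>p. snd p (fst p)) xs)"
    "length Ls = length Ss" "\<forall>i<length Ss. Ls ! i \<in> Ss ! i" "mset Ls \<in> nodes P"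
    unfolding Rstar_def by auto
  from perm_map[OF S(1)] obtain ys where ys: "mset ys = mset xs"
    "map (\<lambda>p. snd p (fst p)) ys = Ss" by blast
  show ?thesis
    apply (rule exI[of _ ys], rule exI[of _ Ls])
    using ys S xs by auto
qed

theorem mainTheorem9:
  fixes \<Delta> :: nat and P :: "'p necp" and Q :: "'a necp"
  assumes "wf_necp \<Delta> P" and "wf_necp \<Delta> Q"
  shows "relax0 \<Delta> (prod_necp Q (tau \<Delta> P Q)) P"
proof -
  let ?N = "nodes (prod_necp Q (tau \<Delta> P Q))"
  have "\<forall>C\<in>?N. \<exists>yL. mset (fst yL) = C \<and> length (snd yL) = length (fst yL) \<and>
     (\<forall>i<length (fst yL). snd yL ! i \<in> (snd (fst yL ! i)) (fst (fst yL ! i))) \<and> mset (snd yL) \<in> nodes P"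
    using key by fastforce
  from bchoice[OF this] obtain g where g0: "\<forall>C \<in> ?N. mset (fst (g C)) = C \<and> length (snd (g C)) = length (fst (g C)) \<and>
     (\<forall>i<length (fst (g C)). snd (g C) ! i \<in> (snd (fst (g C) ! i)) (fst (fst (g C) ! i))) \<and> mset (snd (g C)) \<in> nodes P"
    by blast
  note g = g0[rule_format]
  define ord where "ord C = fst (g C)" for C
  define f where "f C j = snd (g C) ! j" for C j
  have lenP: "length (snd (g C)) = \<Delta>" if "C \<in> ?N" for C
    using g[OF that] assms(1) unfolding wf_necp_def by (metis size_mset)
  have labP: "f C j \<in> labels P" if "C \<in> ?N" "j < \<Delta>" for C j
    using g[OF that(1)] assms(1) lenP[OF that(1)] that(2) unfolding wf_necp_def f_def
    by (metis nth_mem set_mset_mset subsetD)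
  have mem: "f C j \<in> (snd (ord C ! j)) (fst (ord C ! j))" if "C \<in> ?N" "j < \<Delta>" for C j
    using g[OF that(1)] lenP[OF that(1)] that(2) unfolding f_def ord_def by auto
  have nd: "mset (map (f C) [0..<\<Delta>]) \<in> nodes P" if "C \<in> ?N" for C
  proof -
    have "map (f C) [0..<\<Delta>] = snd (g C)"
      unfolding f_def using lenP[OF that] by (metis map_nth)
    then show ?thesis using g[OF that] by simp
  qed
  have edge: "{#f C j, f C' j'#} \<in> edges P"
    if C: "C \<in> ?N" "C' \<in> ?N" "j < \<Delta>" "j' < \<Delta>" and e: "{#ord C ! j, ord C' ! j'#} \<in> edges (prod_necp Q (tau \<Delta> P Q))"
    for C C' j j'
  proof -
    obtain a fa where A: "ord C ! j = (a, fa)" by fastforce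
    obtain b fb where B: "ord C' ! j' = (b, fb)" by fastforce
    have eq: "{#a, b#} \<in> edges Q" and et: "{#fa, fb#} \<in> edges (tau \<Delta> P Q)"
      using e A B by (auto simp: prod_necp_def)
    have x: "f C j \<in> fa a" using mem[OF C(1,3)] A by simp
    have y: "f C' j' \<in> fb b" using mem[OF C(2,4)] B by simp
    have "{#fa a, fb b#} \<in> edges (Rstar P)"
    proof -
      from et obtain f1 f2 where F: "{#fa, fb#} = {#f1, f2#}"
        "\<forall>L1 L2. {#L1, L2#} \<in> edges Q \<longrightarrow> {#f1 L1, f2 L2#} \<in> edges (Rstar P)"
        unfolding tau_def by auto
      from F(1) have "(fa = f1 \<and> fb = f2) \<or> (fa = f2 \<and> fb = f1)"
        by (rule pair_eq)
      then show ?thesis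
      proof
        assume "fa = f1 \<and> fb = f2" then show ?thesis using F(2) eq by auto
      next
        assume h: "fa = f2 \<and> fb = f1"
        have "{#b, a#} \<in> edges Q" using eq by (simp add: add_mset_commute)
        then have "{#f1 b, f2 a#} \<in> edges (Rstar P)" using F(2) by auto
        then show ?thesis using h by (simp add: add_mset_commute)
      qed
    qed
    then obtain S1 S2 where S: "{#fa a, fb b#} = {#S1, S2#}"
      "\<forall>L1\<in>S1. \<forall>L2\<in>S2. {#L1, L2#} \<in> edges P"
      unfolding Rstar_def by auto
    from S(1) have "(fa a = S1 \<and> fb b = S2) \<or> (fa a = S2 \<and> fb b = S1)"
      by (rule pair_eq)
    then show ?thesis using S(2) x y by (auto simp: add_mset_commute)
  qed
  have len: "length (ord C) = \<Delta> \<and> mset (ord C) = C" if "C \<in> ?N" for C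
    using g[OF that] lenP[OF that] unfolding ord_def by simp
  show ?thesis
    unfolding relax0_def
    apply (rule exI[of _ ord], rule exI[of _ f])
    using len labP nd edge by blast
qed

end
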